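(* Let $T$ be a Huffman code tree for $p$ (average length $L_H$), with $P_R\ge 1/2$ its larger root-subtree probability. Then for every $N\ge2$, $\min\{L_H,L^{(\mathrm I)}_N\}=L_H-\delta^{(\mathrm I)}_N(P_R)$ and $\min\{L_H,L^{(\mathrm{II})}\}=L_H-\delta^{(\mathrm{II})}(P_R)$, where $L^{(\mathrm I)}_N$, $L^{(\mathrm{II})}$ are the average code lengths of the Type-I AEDS with $N$ states and the Type-II AEDS built on $T$, and $\delta^{(\mathrm I)}_N(P)=\left[\frac{1-P^{N-1}}{1-P^{N}}P+\frac{1-P^{2^k-N}}{1-P^{N}}(1-P)-k(1-P)\right]_0$ with $k=\lceil\lg N\rceil$, $\delta^{(\mathrm{II})}(P)=\left[\frac{P^3-P^2+2P-1}{(2-P)(1+P+P^2)}\right]_0$, $[u]_0=\max\{u,0\}$. Consequently, if $P_R>(\sqrt5-1)/2\approx0.6180$ then $L^{(\mathrm I)}_2<L_H$, and if $P_R>\omega^{(\mathrm{II})}\approx0.56984$ (the real root of $P^3-P^2+2P-1=0$) then $L^{(\mathrm{II})}<L_H$.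
   Context: Let $\mathcal S$ be a finite alphabet with $|\mathcal S|\ge 2$ and $p=\{p(s)\}$ a probability distribution with $p(s)>0$ (i.i.d. source). $\mathcal B=\{0,1\}^*$, $l(\beta)$ the length of $\beta$, $\lg=\log_2$. An AEDS with finite state set $\mathcal X$ consists of maps $E_{\hat x}:\mathcal S\to\mathcal B$, $F^-_{\hat x}:\mathcal S\to\mathcal X$ ($\hat x\in\mathcal X$) such that for every $x$ the words $E_{\hat x}(s)$ over pairs with $F^-_{\hat x}(s)=x$ are distinct and prefix-free. The state chain moves from $\hat x$ to $F^-_{\hat x}(s)$ with probability $p(s)$; with its stationary distribution $Q$, the average code length is $L=\sum_{\hat x}\sum_s p(s)Q(\hat x)l(E_{\hat x}(s))$. For a code tree $T$ (prefix-free code, codeword $c_T(s)$ of length $l_T(s)\ge1$): $\mathcal S_R,\mathcal S_L$ are the symbols in the right/left root subtree (both nonempty), $P_R=\sum_{\mathcal S_R}p(s)\ge1/2$; $t_R(s)$, $t_L(s)$ denote $c_T(s)$ with its first bit removed. The Huffman code tree is any tree of an optimal (Huffman) prefix code; $L_H$ its average length. Type-I AEDS with $N\ge2$ states $\alpha_1..\alpha_N$ on $T$: with $k=\lceil\lg N\rceil$ and a prefix-free set $\pi_1..\pi_N$ with $l(\pi_j)=k-1$ for $j\le 2^k-N$ and $k$ otherwise: for $s\in\mathcal S_R$, $F^-_{\alpha_j}(s)=\alpha_{j+1}$, $E_{\alpha_j}(s)=t_R(s)$ ($j<N$), $F^-_{\alpha_N}(s)=\alpha_1$, $E_{\alpha_N}(s)=0t_R(s)$;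 for $s\in\mathcal S_L$, $F^-_{\alpha_j}(s)=\alpha_1$, $E_{\alpha_j}(s)=1\pi_jt_L(s)$. Type-II AEDS with states $\alpha_1..\alpha_5$ on $T$ (pairs $(F^-(s),E(s))$): $\alpha_1$: $\mathcal S_R\mapsto(\alpha_3,0t_R)$, $\mathcal S_L\mapsto(\alpha_2,t_L)$; $\alpha_2$: $\mathcal S_R\mapsto(\alpha_3,10t_R)$, $\mathcal S_L\mapsto(\alpha_1,111t_L)$; $\alpha_3$: $\mathcal S_R\mapsto(\alpha_4,t_R)$, $\mathcal S_L\mapsto(\alpha_1,0t_L)$; $\alpha_4$: $\mathcal S_R\mapsto(\alpha_5,t_R)$, $\mathcal S_L\mapsto(\alpha_1,10t_L)$; $\alpha_5$: $\mathcal S_R\mapsto(\alpha_3,11t_R)$, $\mathcal S_L\mapsto(\alpha_1,110t_L)$. *)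

theory Defs
  imports Complex_Main "HOL-Library.Sublist"
begin

text \<open>Codes over a finite alphabet 'a; codewords are bit lists (False = 0, True = 1).\<close>

definition prefix_free :: "('a \<Rightarrow> bool list) \<Rightarrow> bool" where
  "prefix_free c \<longleftrightarrow> (\<forall>s s'. s \<noteq> s' \<longrightarrow> \<not> prefix (c s) (c s'))"

definition code_len :: "('a::finite \<Rightarrow> real) \<Rightarrow> ('a \<Rightarrow> bool list) \<Rightarrow> real" where
  "code_len p c = (\<Sum>s\<in>UNIV. p s * real (length (c s)))"

definition huffman_code :: "('a::finite \<Rightarrow> real) \<Rightarrow> ('a \<Rightarrow> bool list) \<Rightarrow> bool" where
  "huffman_code p c \<longleftrightarrow> prefix_free c \<and>
     (\<forall>c'. prefix_free c' \<longrightarrow> code_len p c \<le> code_len p c')"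

definition subtree_prob :: "('a::finite \<Rightarrow> real) \<Rightarrow> ('a \<Rightarrow> bool list) \<Rightarrow> bool \<Rightarrow> real" where
  "subtree_prob p c b = (\<Sum>s\<in>{s. hd (c s) = b}. p s)"

definition stationary :: "'x set \<Rightarrow> ('x \<Rightarrow> 'a::finite \<Rightarrow> 'x) \<Rightarrow> ('a \<Rightarrow> real) \<Rightarrow> ('x \<Rightarrow> real) \<Rightarrow> bool" where
  "stationary X F p Q \<longleftrightarrow> (\<forall>x\<in>X. 0 \<le> Q x) \<and> sum Q X = 1 \<and>
     (\<forall>y\<in>X. Q y = (\<Sum>x\<in>X. Q x * (\<Sum>s\<in>{s. F x s = y}. p s)))"

definition aeds_len :: "'x set \<Rightarrow> ('x \<Rightarrow> 'a::finite \<Rightarrow> bool list) \<Rightarrow> ('a \<Rightarrow> real) \<Rightarrow> ('x \<Rightarrow> real) \<Rightarrow> real" where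
  "aeds_len X E p Q = (\<Sum>x\<in>X. \<Sum>s\<in>UNIV. p s * Q x * real (length (E x s)))"

definition kN :: "nat \<Rightarrow> nat" where
  "kN N = nat \<lceil>log 2 (real N)\<rceil>"

definition valid_pi :: "nat \<Rightarrow> (nat \<Rightarrow> bool list) \<Rightarrow> bool" where
  "valid_pi N \<pi> \<longleftrightarrow>
     (\<forall>j\<in>{1..N}. length (\<pi> j) = (if j \<le> 2 ^ kN N - N then kN N - 1 else kN N)) \<and>
     (\<forall>i\<in>{1..N}. \<forall>j\<in>{1..N}. i \<noteq> j \<longrightarrow> \<not> prefix (\<pi> i) (\<pi> j))"

text \<open>Type-I AEDS with states 1..N built on code c; the "right" subtree S_R is the set of
  symbols whose codeword starts with bit b.\<close>
definition typeI_F :: "nat \<Rightarrow> ('a \<Rightarrow> bool list) \<Rightarrow> bool \<Rightarrow> nat \<Rightarrow> 'a \<Rightarrow> nat" where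
  "typeI_F N c b j s = (if hd (c s) = b then (if j < N then j + 1 else 1) else 1)"

definition typeI_E :: "nat \<Rightarrow> (nat \<Rightarrow> bool list) \<Rightarrow> ('a \<Rightarrow> bool list) \<Rightarrow> bool \<Rightarrow> nat \<Rightarrow> 'a \<Rightarrow> bool list" where
  "typeI_E N \<pi> c b j s =
     (if hd (c s) = b then (if j < N then tl (c s) else False # tl (c s))
      else True # \<pi> j @ tl (c s))"

definition typeII_F :: "('a \<Rightarrow> bool list) \<Rightarrow> bool \<Rightarrow> nat \<Rightarrow> 'a \<Rightarrow> nat" where
  "typeII_F c b j s =
     (if hd (c s) = b then (if j = 3 then 4 else if j = 4 then 5 else 3)
      else (if j = 1 then 2 else 1))"

definition typeII_E :: "('a \<Rightarrow> bool list) \<Rightarrow> bool \<Rightarrow> nat \<Rightarrow> 'a \<Rightarrow> bool list" where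
  "typeII_E c b j s =
     (if hd (c s) = b then
        (if j = 1 then [False] else if j = 2 then [True, False]
         else if j = 5 then [True, True] else []) @ tl (c s)
      else
        (if j = 1 then [] else if j = 2 then [True, True, True]
         else if j = 3 then [False] else if j = 4 then [True, False]
         else [True, True, False]) @ tl (c s))"

definition pos0 :: "real \<Rightarrow> real" where
  "pos0 u = max u 0"

definition deltaI :: "nat \<Rightarrow> real \<Rightarrow> real" where
  "deltaI N P = pos0 ((1 - P ^ (N - 1)) / (1 - P ^ N) * P
                     + (1 - P ^ (2 ^ kN N - N)) / (1 - P ^ N) * (1 - P)
                     - real (kN N) * (1 - P))"

definition deltaII :: "real \<Rightarrow> real" where
  "deltaII P = pos0 ((P ^ 3 - P ^ 2 + 2 * P - 1) / ((2 - P) * (1 + P + P ^ 2)))"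

text \<open>The (unique) real root of P^3 - P^2 + 2P - 1.\<close>
definition omegaII :: real where
  "omegaII = (THE x. x ^ 3 - x ^ 2 + 2 * x - 1 = 0)"

end

theory Submission
  imports Defs
begin


definition PLp :: "('a::finite \<Rightarrow> real) \<Rightarrow> ('a \<Rightarrow> bool list) \<Rightarrow> bool \<Rightarrow> real" where
  "PLp p c b = (\<Sum>s\<in>{s. hd (c s) \<noteq> b}. p s)"

lemma split_if_sum:
  fixes f g :: "'a::finite \<Rightarrow> real"
  shows "(\<Sum>s\<in>UNIV. if hd (c s) = b then f s else g s)
     = (\<Sum>s\<in>{s. hd (c s) = b}. f s) + (\<Sum>s\<in>{s. hd (c s) \<noteq> b}. g s)"
proof -
  have "(\<Sum>s\<in>UNIV. if hd (c s) = b then f s else g s)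
     = (\<Sum>s\<in>UNIV \<inter> {s. hd (c s) = b}. f s) + (\<Sum>s\<in>UNIV \<inter> - {s. hd (c s) = b}. g s)"
    by (rule sum.If_cases) simp
  moreover have "UNIV \<inter> - {s. hd (c s) = b} = {s. hd (c s) \<noteq> b}" by auto
  ultimately show ?thesis by simp
qed

lemma P_PL:
  fixes p :: "'a::finite \<Rightarrow> real"
  assumes "(\<Sum>s\<in>UNIV. p s) = 1"
  shows "subtree_prob p c b + PLp p c b = 1"
  using split_if_sum[of c b p p] assms by (simp add: subtree_prob_def PLp_def)

lemma cost:
  fixes p :: "'a::finite \<Rightarrow> real"
  assumes "\<And>s. real (length (E s)) = real (length (c s)) + (if hd (c s) = b then r else l)"
  shows "(\<Sum>s\<in>UNIV. p s * real (length (E s))) = code_len p c + r * subtree_prob p c b + l * PLp p c b"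
proof -
  have "(\<Sum>s\<in>UNIV. p s * real (length (E s))) = (\<Sum>s\<in>UNIV. p s * real (length (c s)) + (if hd (c s) = b then r * p s else l * p s))"
    by (rule sum.cong) (auto simp: assms algebra_simps)
  also have "\<dots> = code_len p c + ((\<Sum>s\<in>{s. hd (c s) = b}. r * p s) + (\<Sum>s\<in>{s. hd (c s) \<noteq> b}. l * p s))"
    by (simp add: sum.distrib code_len_def split_if_sum)
  finally show ?thesis by (simp add: subtree_prob_def PLp_def sum_distrib_left)
qed

lemma sumF:
  fixes p :: "'a::finite \<Rightarrow> real"
  shows "(\<Sum>s\<in>{s. (if hd (c s) = b then u else v) = y}. p s) = (if u = y then subtree_prob p c b else 0) + (if v = y then PLp p c b else 0)"
proof -
  have "(\<Sum>s\<in>{s. (if hd (c s) = b then u else v) = y}. p s) = (\<Sum>s\<in>UNIV. if hd (c s) = b then (if u = y then p s else 0) else (if v = y then p s else 0))"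
    by (rule sum.mono_neutral_cong_left) auto
  then show ?thesis by (simp add: split_if_sum subtree_prob_def PLp_def)
qed

lemma aeds_eq: "aeds_len X E p Q = (\<Sum>x\<in>X. Q x * (\<Sum>s\<in>UNIV. p s * real (length (E x s))))"
  by (simp add: aeds_len_def sum_distrib_left mult_ac)

lemma min_pos0: "min a (b::real) = a - pos0 (a - b)"
  by (simp add: pos0_def min_def max_def)

definition fom :: "real \<Rightarrow> real" where "fom x = x ^ 3 - x ^ 2 + 2 * x - 1"

lemma fom_mono: "x < y \<Longrightarrow> fom x < fom y"
proof -
  assume "x < y"
  have "y^2 + x*y + x^2 - x - y + 2 > 0"
  proof -
    have "0 \<le> (x - y)^2" by simp
    moreover have "0 \<le> (3*(x+y) - 2)^2" by simp
    ultimately show ?thesis by (simp add: power2_eq_square algebra_simps)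
  qed
  moreover have "fom y - fom x = (y - x) * (y^2 + x*y + x^2 - x - y + 2)"
    by (simp add: fom_def power2_eq_square power3_eq_cube algebra_simps)
  ultimately show ?thesis using \<open>x < y\<close> by (smt (verit) mult_pos_pos)
qed

lemma omega_prop: "fom omegaII = 0"
proof -
  have c: "continuous_on {0..1} fom" unfolding fom_def by (intro continuous_intros)
  have "fom 0 \<le> 0" "0 \<le> fom 1" by (simp_all add: fom_def)
  then obtain x where x: "fom x = 0" using IVT'[of fom 0 0 1, OF _ _ _ c] by auto
  have u: "y = x" if "fom y = 0" for y
  proof (rule ccontr)
    assume "y \<noteq> x"
    then have "y < x \<or> x < y" by linarith
    then show False using fom_mono[of y x] fom_mono[of x y] x that by auto
  qed
  have "omegaII = x" unfolding omegaII_def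
  proof (rule the_equality)
    show "x ^ 3 - x ^ 2 + 2 * x - 1 = 0" using x by (simp add: fom_def)
    show "y = x" if "y ^ 3 - y ^ 2 + 2 * y - 1 = 0" for y using u[of y] that by (simp add: fom_def)
  qed
  then show ?thesis using x by simp
qed



lemma kN_facts:
  assumes "N \<ge> 2"
  shows "kN N \<ge> 1" "2 ^ kN N \<le> 2 * N"
proof -
  have lg: "log 2 (real N) \<ge> 1" using assms by (simp add: le_log_iff)
  have c1: "\<lceil>log 2 (real N)\<rceil> \<ge> 1" using lg by linarith
  then show "kN N \<ge> 1" unfolding kN_def by linarith
  have "real_of_int \<lceil>log 2 (real N)\<rceil> < log 2 (real N) + 1" by linarith
  then have "real (kN N) < log 2 (real N) + 1" using c1 unfolding kN_def by simp
  then have "2 powr real (kN N) < 2 powr (log 2 (real N) + 1)" by (intro powr_less_mono) auto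
  also have "\<dots> = 2 * real N" using assms by (simp add: powr_add)
  finally have "real (2 ^ kN N) < real (2 * N)" by (simp add: powr_realpow)
  then show "2 ^ kN N \<le> 2 * N" by linarith
qed

lemma tl_len: "c \<noteq> [] \<Longrightarrow> real (length (tl c)) = real (length c) - 1"
  by (cases c) auto

lemma tl_len2: "c \<noteq> [] \<Longrightarrow> real (length c - Suc 0) = real (length c) - 1"
  by (cases c) auto



lemma alg1:
  fixes P a bb d K :: real
  assumes d: "d \<noteq> 0" and key: "P * d - (1 - P) * a * P = (1 - a) * P"
  shows "P - K - (1 - P) / d * a * P + (1 - P) / d * (1 - bb) = (1 - a) / d * P + (1 - bb) / d * (1 - P) - K"
proof -
  have "P - K - (1 - P) / d * a * P + (1 - P) / d * (1 - bb) - ((1 - a) / d * P + (1 - bb) / d * (1 - P) - K)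
      = (P * d - (1 - P) * a * P - (1 - a) * P) / d"
    using d by (simp add: field_simps)
  also have "\<dots> = 0" using key by simp
  finally show ?thesis by (simp only: right_minus_eq)
qed

lemma typeI_part:
  fixes p :: "'a::finite \<Rightarrow> real" and c :: "'a \<Rightarrow> bool list" and b :: bool
  assumes ne: "\<And>s. c s \<noteq> []"
    and PPL: "subtree_prob p c b + PLp p c b = 1"
    and Pge: "subtree_prob p c b \<ge> 1/2" and Plt: "subtree_prob p c b < 1"
    and N: "N \<ge> 2" and vp: "valid_pi N \<pi>" and st: "stationary {1..N} (typeI_F N c b) p Q"
  shows "code_len p c - aeds_len {1..N} (typeI_E N \<pi> c b) p Q
      = (1 - subtree_prob p c b ^ (N - 1)) / (1 - subtree_prob p c b ^ N) * subtree_prob p c b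
                     + (1 - subtree_prob p c b ^ (2 ^ kN N - N)) / (1 - subtree_prob p c b ^ N) * (1 - subtree_prob p c b)
                     - real (kN N) * (1 - subtree_prob p c b)"
proof -
  define P where "P = subtree_prob p c b"
  define PL where "PL = PLp p c b"
  define LH where "LH = code_len p c"
  define k where "k = kN N"
  define m where "m = 2 ^ k - N"
  have PL: "PL = 1 - P" using PPL by (simp add: P_def PL_def)
  have k1: "k \<ge> 1" and mN: "m \<le> N" using kN_facts[OF N] by (auto simp: k_def m_def)
  have Q1: "\<And>y. y \<in> {1..N} \<Longrightarrow> Q y = (\<Sum>x\<in>{1..N}. Q x * (\<Sum>s\<in>{s. typeI_F N c b x s = y}. p s))"
    using st unfolding stationary_def by blast
  have sumQ: "(\<Sum>j\<in>{1..N}. Q j) = 1" using st unfolding stationary_def by blast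
  have rec: "Q (Suc j) = Q j * P" if j: "1 \<le> j" "j < N" for j
  proof -
    have "Q (Suc j) = (\<Sum>x\<in>{1..N}. Q x * (\<Sum>s\<in>{s. typeI_F N c b x s = Suc j}. p s))"
      using Q1[of "Suc j"] j by simp
    also have "\<dots> = (\<Sum>x\<in>{1..N}. if x = j then Q x * P else 0)"
      unfolding typeI_F_def sumF P_def[symmetric] PL_def[symmetric]
      by (rule sum.cong) (use j in auto)
    also have "\<dots> = Q j * P" using j by (simp add: sum.delta)
    finally show ?thesis .
  qed
  have pw: "j \<le> N \<longrightarrow> 1 \<le> j \<longrightarrow> Q j = Q 1 * P ^ (j - 1)" for j
  proof (induction j)
    case 0 then show ?case by simp
  next
    case (Suc j)
    show ?case
    proof (cases "j = 0")
      case True then show ?thesis by simp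
    next
      case False
      then show ?thesis using Suc rec[of j]
        by (cases j) (auto simp: mult_ac)
    qed
  qed
  have geo: "n \<le> N \<longrightarrow> (1 - P) * (\<Sum>j=1..n. Q j) = Q 1 * (1 - P ^ n)" for n
  proof (induction n)
    case 0 then show ?case by simp
  next
    case (Suc n)
    show ?case
    proof
      assume sn: "Suc n \<le> N"
      have ih: "(1 - P) * (\<Sum>j=1..n. Q j) = Q 1 * (1 - P ^ n)" using Suc sn by simp
      have q: "Q (Suc n) = Q 1 * P ^ n" using pw[of "Suc n"] sn by simp
      have "(1 - P) * (\<Sum>j=1..Suc n. Q j) = (1 - P) * (\<Sum>j=1..n. Q j) + (1 - P) * Q (Suc n)"
        by (simp add: sum.cl_ivl_Suc distrib_left)
      also have "\<dots> = Q 1 * (1 - P ^ n) + (1 - P) * (Q 1 * P ^ n)" using ih q by simp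
      also have "\<dots> = Q 1 * (1 - P ^ Suc n)" by (simp add: algebra_simps)
      finally show "(1 - P) * (\<Sum>j=1..Suc n. Q j) = Q 1 * (1 - P ^ Suc n)" .
    qed
  qed
  have P0: "P > 0" using Pge by (simp add: P_def)
  have P1: "P < 1" using Plt by (simp add: P_def)
  have PN: "P ^ N < 1" using P0 P1 N power_Suc_less_one[of P "N - 1"] by (cases N) auto
  have D: "1 - P ^ N > 0" using PN by simp
  have eqN: "1 - P = Q 1 * (1 - P ^ N)" using geo[of N] sumQ by simp
  have Q1v: "Q 1 = (1 - P) / (1 - P ^ N)" using eqN D by (simp add: field_simps)
  have QN: "Q N = Q 1 * P ^ (N - 1)" using pw[of N] N by simp
  have Sm: "(1 - P) * (\<Sum>j=1..m. Q j) = Q 1 * (1 - P ^ m)" using geo[of m] mN by simp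
  have cst: "(\<Sum>s\<in>UNIV. p s * real (length (typeI_E N \<pi> c b j s)))
      = LH + (if j < N then -1 else 0) * P + real (length (\<pi> j)) * PL" for j
    unfolding LH_def P_def PL_def
    by (rule cost) (auto simp: typeI_E_def tl_len tl_len2 ne)
  have lpi: "real (length (\<pi> j)) = real k - (if j \<le> m then 1 else 0)" if "j \<in> {1..N}" for j
    using vp that k1 unfolding valid_pi_def k_def[symmetric] m_def[symmetric] by auto
  have "aeds_len {1..N} (typeI_E N \<pi> c b) p Q
      = (\<Sum>j\<in>{1..N}. Q j * (LH - P + real k * PL) + (if j = N then Q j * P else 0)
            - (if j \<le> m then Q j * PL else 0))"
    unfolding aeds_eq cst
    by (rule sum.cong) (auto simp: lpi algebra_simps)
  also have "\<dots> = (LH - P + real k * PL) + Q N * P - PL * (\<Sum>j\<in>{1..N}. if j \<le> m then Q j else 0)"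
  proof -
    have s1: "(\<Sum>j\<in>{1..N}. Q j * (LH - P + real k * PL)) = LH - P + real k * PL"
      using sumQ by (simp add: sum_distrib_right[symmetric])
    have s2: "(\<Sum>j\<in>{1..N}. if j = N then Q j * P else 0) = Q N * P"
      using N by (simp add: sum.delta)
    have s3: "(\<Sum>j\<in>{1..N}. if j \<le> m then Q j * PL else 0) = PL * (\<Sum>j\<in>{1..N}. if j \<le> m then Q j else 0)"
      by (simp add: sum_distrib_left) (rule sum.cong, auto)
    show ?thesis unfolding sum_subtractf sum.distrib s1 s2 s3 ..
  qed
  also have "(\<Sum>j\<in>{1..N}. if j \<le> m then Q j else 0) = (\<Sum>j\<in>{1..m}. Q j)"
  proof -
    have "{j \<in> {1..N}. j \<le> m} = {1..m}" using mN by auto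
    then show ?thesis using sum.inter_filter[of "{1..N}" Q "\<lambda>j. j \<le> m", symmetric] by simp
  qed
  finally have L: "aeds_len {1..N} (typeI_E N \<pi> c b) p Q = LH - P + real k * PL + Q N * P - PL * (\<Sum>j=1..m. Q j)" .
  define a where "a = P ^ (N - 1)"
  have PNa: "P ^ N = P * a" unfolding a_def using N by (cases N) auto
  define bb where "bb = P ^ m"
  have D': "1 - P * a \<noteq> 0" using D PNa by simp
  have e1: "LH - aeds_len {1..N} (typeI_E N \<pi> c b) p Q
     = P - real k * (1 - P) - Q 1 * a * P + (1 - P) * (\<Sum>j=1..m. Q j)"
    unfolding L PL QN a_def by (simp add: algebra_simps)
  have "LH - aeds_len {1..N} (typeI_E N \<pi> c b) p Q
     = (1 - a) / (1 - P * a) * P + (1 - bb) / (1 - P * a) * (1 - P) - real k * (1 - P)"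
    unfolding e1 Sm Q1v PNa bb_def[symmetric] using D'
    by (intro alg1) (auto simp: algebra_simps)
  then show ?thesis
    unfolding P_def[symmetric] LH_def[symmetric] k_def[symmetric] m_def[symmetric] a_def[symmetric] bb_def[symmetric]
    using PNa by simp
qed

lemma typeII_part:
  fixes p :: "'a::finite \<Rightarrow> real" and c :: "'a \<Rightarrow> bool list" and b :: bool
  assumes ne: "\<And>s. c s \<noteq> []"
    and PPL: "subtree_prob p c b + PLp p c b = 1"
    and Pge: "subtree_prob p c b \<ge> 1/2" and Plt: "subtree_prob p c b < 1"
    and st: "stationary {1..5} (typeII_F c b) p Q"
  shows "code_len p c - aeds_len {1..5} (typeII_E c b) p Q
      = (subtree_prob p c b ^ 3 - subtree_prob p c b ^ 2 + 2 * subtree_prob p c b - 1)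
         / ((2 - subtree_prob p c b) * (1 + subtree_prob p c b + subtree_prob p c b ^ 2))"
proof -
  define P where "P = subtree_prob p c b"
  define PL where "PL = PLp p c b"
  define LH where "LH = code_len p c"
  have PL: "PL = 1 - P" using PPL by (simp add: P_def PL_def)
  have P0: "P > 0" using Pge by (simp add: P_def)
  have P1: "P < 1" using Plt by (simp add: P_def)
  have five: "{1..5::nat} = {1,2,3,4,5}" by auto
  have Qe: "\<And>y. y \<in> {1..5} \<Longrightarrow> Q y = (\<Sum>x\<in>{1..5}. Q x * (\<Sum>s\<in>{s. typeII_F c b x s = y}. p s))"
    using st unfolding stationary_def by blast
  have sumQ: "(\<Sum>j\<in>{1..5::nat}. Q j) = 1" using st unfolding stationary_def by blast
  have Qe': "Q y = (\<Sum>x\<in>{1,2,3,4,5::nat}. Q x * ((if (if x = 3 then 4 else if x = 4 then 5 else 3) = y then P else 0)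
         + (if (if x = 1 then 2 else 1) = y then PL else 0)))" if "y \<in> {1..5}" for y
    using Qe[OF that] unfolding typeII_F_def sumF P_def[symmetric] PL_def[symmetric] five .
  have e2: "Q 2 = Q 1 * PL" using Qe'[of 2] by simp
  have e3: "Q 3 = (Q 1 + Q 2 + Q 5) * P" using Qe'[of 3] by (simp add: algebra_simps)
  have e4: "Q 4 = Q 3 * P" using Qe'[of 4] by simp
  have e5: "Q 5 = Q 4 * P" using Qe'[of 5] by simp
  have s: "Q 1 + Q 2 + Q 3 + Q 4 + Q 5 = 1" using sumQ unfolding five by simp
  have a1: "Q 1 * (2 - P) = 1 - P" using e2 e3 e4 e5 s PL by algebra
  have a3: "(1 - P) * (Q 3 * (1 + P + P^2) - P) = 0" using e2 e3 e4 e5 s PL by algebra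
  have q1: "Q 1 = (1 - P) / (2 - P)" using a1 P1 by (simp add: field_simps)
  have q3: "Q 3 = P / (1 + P + P^2)"
  proof -
    have "Q 3 * (1 + P + P^2) - P = 0" using a3 P1 by simp
    moreover have "1 + P + P^2 > 0" using P0 by (simp add: add_pos_nonneg)
    ultimately show ?thesis by (simp add: field_simps)
  qed
  define rr :: "nat \<Rightarrow> real" where "rr j = (if j = 1 then 0 else if j = 2 then 1 else if j = 5 then 1 else -1)" for j
  define ll :: "nat \<Rightarrow> real" where "ll j = (if j = 1 then -1 else if j = 2 then 2 else if j = 3 then 0 else if j = 4 then 1 else 2)" for j
  have cst: "(\<Sum>s\<in>UNIV. p s * real (length (typeII_E c b j s))) = LH + rr j * P + ll j * PL" for j
    unfolding LH_def P_def PL_def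
    by (rule cost) (auto simp: typeII_E_def tl_len tl_len2 ne rr_def ll_def)
  have L: "aeds_len {1..5} (typeII_E c b) p Q = (\<Sum>j\<in>{1,2,3,4,5::nat}. Q j * (LH + rr j * P + ll j * PL))"
    unfolding aeds_eq cst five ..
  have D1: "2 - P \<noteq> 0" using P1 by simp
  have D2: "1 + P + P^2 \<noteq> 0" using P0 by (smt (verit) zero_le_power2)
  define A where "A = -(1 - P) + (1 - P) * (P + 2 * (1 - P))"
  define B where "B = -P + P * (-P + (1 - P)) + P^2 * (P + 2 * (1 - P))"
  define d1 where "d1 = 2 - P"
  define d2 where "d2 = 1 + P + P^2"
  have s1: "aeds_len {1..5} (typeII_E c b) p Q = LH * (Q 1 + Q 2 + Q 3 + Q 4 + Q 5)
      + (Q 1 * (- PL) + Q 2 * (P + 2 * PL) + Q 3 * (- P) + Q 4 * (- P + PL) + Q 5 * (P + 2 * PL))"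
    unfolding L by (simp add: rr_def ll_def algebra_simps)
  have s2: "Q 1 * (- PL) + Q 2 * (P + 2 * PL) + Q 3 * (- P) + Q 4 * (- P + PL) + Q 5 * (P + 2 * PL)
      = Q 1 * A + Q 3 * B"
    unfolding e2 e5 e4 PL A_def B_def by (simp add: algebra_simps power2_eq_square)
  have nz: "d1 \<noteq> 0" "d2 \<noteq> 0" using D1 D2 unfolding d1_def d2_def by auto
  have s4: "- ((1 - P) * A * d2 + P * B * d1) = P ^ 3 - P ^ 2 + 2 * P - 1"
    unfolding A_def B_def d1_def d2_def by algebra
  have "LH - aeds_len {1..5} (typeII_E c b) p Q = - (Q 1 * A + Q 3 * B)"
    unfolding s1 s2 s by simp
  also have "\<dots> = - ((1 - P) * A * d2 + P * B * d1) / (d1 * d2)"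
    unfolding q1 q3 d1_def[symmetric] d2_def[symmetric] using nz by (simp add: field_simps)
  also have "\<dots> = (P ^ 3 - P ^ 2 + 2 * P - 1) / (d1 * d2)"
    using s4 by simp
  finally have "LH - aeds_len {1..5} (typeII_E c b) p Q = (P ^ 3 - P ^ 2 + 2 * P - 1) / ((2 - P) * (1 + P + P ^ 2))"
    unfolding d1_def d2_def .
  then show ?thesis unfolding P_def LH_def .
qed

theorem corollary1:
  fixes p :: "'a::finite \<Rightarrow> real" and c :: "'a \<Rightarrow> bool list" and b :: bool
  assumes "card (UNIV :: 'a set) \<ge> 2"
    and "\<forall>s. p s > 0"
    and "(\<Sum>s\<in>UNIV. p s) = 1"
    and "huffman_code p c"
    and "subtree_prob p c b \<ge> 1/2"
  shows "(\<forall>N \<pi> Q. N \<ge> 2 \<longrightarrow> valid_pi N \<pi> \<longrightarrow> stationary {1..N} (typeI_F N c b) p Q \<longrightarrow>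
            min (code_len p c) (aeds_len {1..N} (typeI_E N \<pi> c b) p Q)
              = code_len p c - deltaI N (subtree_prob p c b))
       \<and> (\<forall>Q. stationary {1..5} (typeII_F c b) p Q \<longrightarrow>
            min (code_len p c) (aeds_len {1..5} (typeII_E c b) p Q)
              = code_len p c - deltaII (subtree_prob p c b))
       \<and> (subtree_prob p c b > (sqrt 5 - 1) / 2 \<longrightarrow>
            (\<forall>\<pi> Q. valid_pi 2 \<pi> \<longrightarrow> stationary {1..2} (typeI_F 2 c b) p Q \<longrightarrow>
               aeds_len {1..2} (typeI_E 2 \<pi> c b) p Q < code_len p c))
       \<and> (subtree_prob p c b > omegaII \<longrightarrow>
            (\<forall>Q. stationary {1..5} (typeII_F c b) p Q \<longrightarrow>
               aeds_len {1..5} (typeII_E c b) p Q < code_len p c))"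
proof -
  define P where "P = subtree_prob p c b"
  have pf: "prefix_free c" and opt: "\<And>c'. prefix_free c' \<Longrightarrow> code_len p c \<le> code_len p c'"
    using assms(4) unfolding huffman_code_def by auto
  have ne: "c s \<noteq> []" for s
  proof
    assume cs: "c s = []"
    have "\<exists>s'. s' \<noteq> s"
    proof (rule ccontr)
      assume "\<not> (\<exists>s'. s' \<noteq> s)"
      then have "(UNIV :: 'a set) = {s}" by auto
      then have "card (UNIV :: 'a set) = 1" using card_1_singleton_iff by (metis One_nat_def)
      then show False using assms(1) by linarith
    qed
    then obtain s' where "s' \<noteq> s" by blast
    then show False using pf cs unfolding prefix_free_def by (metis Nil_prefix)
  qed
  have PPL: "subtree_prob p c b + PLp p c b = 1" using P_PL assms(3) by blast
  have ex: "\<exists>s0. hd (c s0) \<noteq> b"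
  proof (rule ccontr)
    assume "\<not> (\<exists>s0. hd (c s0) \<noteq> b)"
    then have allb: "\<And>s. hd (c s) = b" by auto
    define c' where "c' s = tl (c s)" for s
    have "prefix_free c'"
      unfolding prefix_free_def
    proof (intro allI impI)
      fix s s' :: 'a assume "s \<noteq> s'"
      then have np: "\<not> prefix (c s) (c s')" using pf unfolding prefix_free_def by blast
      have "c s = hd (c s) # tl (c s)" "c s' = hd (c s') # tl (c s')" using ne by simp_all
      then have "c s = b # c' s" "c s' = b # c' s'" using allb unfolding c'_def by simp_all
      then show "\<not> prefix (c' s) (c' s')" using np by auto
    qed
    then have "code_len p c \<le> code_len p c'" by (rule opt)
    moreover have "code_len p c' = code_len p c + (-1) * subtree_prob p c b + 0 * PLp p c b"
      unfolding code_len_def[of p c'] by (rule cost) (auto simp: c'_def tl_len tl_len2 ne allb)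
    moreover have "subtree_prob p c b = 1" unfolding subtree_prob_def using allb assms(3) by simp
    ultimately show False by simp
  qed
  then obtain s0 where s0: "hd (c s0) \<noteq> b" by blast
  have "PLp p c b \<ge> p s0" unfolding PLp_def
    by (rule member_le_sum) (use s0 assms(2) in \<open>auto intro: less_imp_le\<close>)
  moreover have "p s0 > 0" using assms(2) by simp
  ultimately have Plt: "subtree_prob p c b < 1" using PPL by linarith
  have I: "\<forall>N \<pi> Q. N \<ge> 2 \<longrightarrow> valid_pi N \<pi> \<longrightarrow> stationary {1..N} (typeI_F N c b) p Q \<longrightarrow>
            min (code_len p c) (aeds_len {1..N} (typeI_E N \<pi> c b) p Q)
              = code_len p c - deltaI N (subtree_prob p c b)"
  proof (intro allI impI)
    fix N \<pi> Q assume h: "N \<ge> 2" "valid_pi N \<pi>" "stationary {1..N} (typeI_F N c b) p Q"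
    show "min (code_len p c) (aeds_len {1..N} (typeI_E N \<pi> c b) p Q)
              = code_len p c - deltaI N (subtree_prob p c b)"
      unfolding min_pos0 deltaI_def typeI_part[OF ne PPL assms(5) Plt h] ..
  qed
  have II: "\<forall>Q. stationary {1..5} (typeII_F c b) p Q \<longrightarrow>
            min (code_len p c) (aeds_len {1..5} (typeII_E c b) p Q)
              = code_len p c - deltaII (subtree_prob p c b)"
  proof (intro allI impI)
    fix Q assume h: "stationary {1..5} (typeII_F c b) p Q"
    show "min (code_len p c) (aeds_len {1..5} (typeII_E c b) p Q)
              = code_len p c - deltaII (subtree_prob p c b)"
      unfolding min_pos0 deltaII_def typeII_part[OF ne PPL assms(5) Plt h] ..
  qed
  have P0: "P > 0" "P < 1" using assms(5) Plt by (auto simp: P_def)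
  have III: "subtree_prob p c b > (sqrt 5 - 1) / 2 \<longrightarrow>
            (\<forall>\<pi> Q. valid_pi 2 \<pi> \<longrightarrow> stationary {1..2} (typeI_F 2 c b) p Q \<longrightarrow>
               aeds_len {1..2} (typeI_E 2 \<pi> c b) p Q < code_len p c)"
  proof (intro allI impI)
    fix \<pi> Q assume g: "subtree_prob p c b > (sqrt 5 - 1) / 2" and h: "valid_pi 2 \<pi>" "stationary {1..2} (typeI_F 2 c b) p Q"
    have k2: "kN 2 = 1" by (simp add: kN_def)
    have "2 * P + 1 > sqrt 5" using g by (simp add: P_def)
    then have "(2 * P + 1)^2 > (sqrt 5)^2" using P0 by (intro power_strict_mono) auto
    then have gq: "P^2 + P - 1 > 0" by (simp add: power2_eq_square algebra_simps)
    have "code_len p c - aeds_len {1..2} (typeI_E 2 \<pi> c b) p Q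
        = (1 - P) / (1 - P ^ 2) * P - (1 - P)"
      using typeI_part[OF ne PPL assms(5) Plt _ h] unfolding k2 P_def[symmetric] by simp
    also have "\<dots> = (P^2 + P - 1) / (1 + P)"
    proof -
      have "P * P < 1 * 1" using P0 by (intro mult_strict_mono) auto
      then have nz: "1 - P * P \<noteq> 0" "1 + P \<noteq> 0" using P0 by auto
      then show ?thesis by (simp add: field_simps power2_eq_square)
    qed
    also have "\<dots> > 0" using gq P0 by simp
    finally show "aeds_len {1..2} (typeI_E 2 \<pi> c b) p Q < code_len p c" by simp
  qed
  have IV: "subtree_prob p c b > omegaII \<longrightarrow>
            (\<forall>Q. stationary {1..5} (typeII_F c b) p Q \<longrightarrow>
               aeds_len {1..5} (typeII_E c b) p Q < code_len p c)"
  proof (intro allI impI)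
    fix Q assume g: "subtree_prob p c b > omegaII" and h: "stationary {1..5} (typeII_F c b) p Q"
    have "fom P > 0" using fom_mono[of omegaII P] omega_prop g by (simp add: P_def)
    then have n: "P ^ 3 - P ^ 2 + 2 * P - 1 > 0" by (simp add: fom_def)
    have d: "(2 - P) * (1 + P + P ^ 2) > 0" using P0 by (intro mult_pos_pos) (auto simp: add_pos_nonneg)
    have "code_len p c - aeds_len {1..5} (typeII_E c b) p Q > 0"
      unfolding typeII_part[OF ne PPL assms(5) Plt h] P_def[symmetric] using n d by simp
    then show "aeds_len {1..5} (typeII_E c b) p Q < code_len p c" by simp
  qed
  show ?thesis using I II III IV by (intro conjI)
qed

end
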